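(* Let $G=(V,E)$ be an undirected graph with known non-negative edge weights such that all shortest paths are unique, $m=|E|$, and suppose the ordering of the (unknown, distinct) edge capacities is a uniformly random permutation of $\{1,\dots,m\}$. For $X\subseteq V$ let $f(X)$ be the expected number of edges revealed by the vantage point set $X$. Then $f$ is monotone and submodular: for all $X\subseteq V$ and $w\in V$, $f(X\cup\{w\})\ge f(X)$; and for all $X\subseteq Y\subseteq V$ and $w\in V$, $f(X\cup\{w\})-f(X)\ge f(Y\cup\{w\})-f(Y)$.
   Context: For vertices $s,t$, $P(s,t)$ denotes the unique shortest path from $s$ to $t$ with respect to the edge weights. An edge $e$ on $P(s,t)$ is a bottleneck edge of $P(s,t)$ if its capacity is strictly smaller than the capacity of every other edge of $P(s,t)$. Selecting a vertex $s$ as a vantage point reveals the bottleneck edge of $P(s,t)$ for every $t\in V\setminus\{s\}$; a set $X$ of vantage points reveals the union of the edges revealed by its members. *)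

theory Defs
  imports Complex_Main "HOL-Library.FuncSet"
begin

text \<open>Undirected graph: vertex set V (finite), edges E are 2-element subsets of V.
  Paths are simple paths given as nonempty vertex lists.\<close>

fun path_edges :: "'a list \<Rightarrow> 'a set set" where
  "path_edges (u # v # rest) = insert {u, v} (path_edges (v # rest))"
| "path_edges _ = {}"

definition is_path :: "'a set \<Rightarrow> 'a set set \<Rightarrow> 'a list \<Rightarrow> 'a \<Rightarrow> 'a \<Rightarrow> bool" where
  "is_path V E p s t \<longleftrightarrow> p \<noteq> [] \<and> hd p = s \<and> last p = t \<and> distinct p \<and>
     set p \<subseteq> V \<and> path_edges p \<subseteq> E"

definition path_weight :: "('a set \<Rightarrow> real) \<Rightarrow> 'a list \<Rightarrow> real" where
  "path_weight wt p = (\<Sum>e\<in>path_edges p. wt e)"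

definition is_shortest_path ::
  "'a set \<Rightarrow> 'a set set \<Rightarrow> ('a set \<Rightarrow> real) \<Rightarrow> 'a list \<Rightarrow> 'a \<Rightarrow> 'a \<Rightarrow> bool" where
  "is_shortest_path V E wt p s t \<longleftrightarrow> is_path V E p s t \<and>
     (\<forall>q. is_path V E q s t \<longrightarrow> path_weight wt p \<le> path_weight wt q)"

definition unique_shortest_paths :: "'a set \<Rightarrow> 'a set set \<Rightarrow> ('a set \<Rightarrow> real) \<Rightarrow> bool" where
  "unique_shortest_paths V E wt \<longleftrightarrow> (\<forall>s\<in>V. \<forall>t\<in>V. \<forall>p q.
     is_shortest_path V E wt p s t \<and> is_shortest_path V E wt q s t \<longrightarrow> p = q)"

definition is_bottleneck :: "('a set \<Rightarrow> nat) \<Rightarrow> 'a list \<Rightarrow> 'a set \<Rightarrow> bool" where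
  "is_bottleneck cap p e \<longleftrightarrow> e \<in> path_edges p \<and>
     (\<forall>e'\<in>path_edges p. e' \<noteq> e \<longrightarrow> cap e < cap e')"

definition revealed ::
  "'a set \<Rightarrow> 'a set set \<Rightarrow> ('a set \<Rightarrow> real) \<Rightarrow> ('a set \<Rightarrow> nat) \<Rightarrow> 'a set \<Rightarrow> 'a set set" where
  "revealed V E wt cap X = {e. \<exists>s\<in>X. \<exists>t\<in>V - {s}. \<exists>p.
     is_shortest_path V E wt p s t \<and> is_bottleneck cap p e}"

text \<open>All orderings of the capacities: bijections E \<rightarrow> {1..m}, uniformly distributed.\<close>
definition capacity_orders :: "'a set set \<Rightarrow> ('a set \<Rightarrow> nat) set" where
  "capacity_orders E = {cap \<in> E \<rightarrow>\<^sub>E {1..card E}. bij_betw cap E {1..card E}}"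

definition expected_revealed ::
  "'a set \<Rightarrow> 'a set set \<Rightarrow> ('a set \<Rightarrow> real) \<Rightarrow> 'a set \<Rightarrow> real" where
  "expected_revealed V E wt X =
     (\<Sum>cap\<in>capacity_orders E. real (card (revealed V E wt cap X))) / real (card (capacity_orders E))"

end

theory Submission
  imports Defs
begin

lemma revealed_union:
  "revealed V E wt cap (X \<union> Y) = revealed V E wt cap X \<union> revealed V E wt cap Y"
  unfolding revealed_def by blast

lemma revealed_mono:
  "X \<subseteq> Y \<Longrightarrow> revealed V E wt cap X \<subseteq> revealed V E wt cap Y"
  unfolding revealed_def by blast

lemma revealed_sub: "revealed V E wt cap X \<subseteq> E"
  unfolding revealed_def is_shortest_path_def is_path_def is_bottleneck_def by blast

lemma card_Un_diff_real:
  assumes "finite A" "finite C"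
  shows "real (card (A \<union> C)) = real (card A) + real (card (C - A))"
proof -
  have "card (A \<union> (C - A)) = card A + card (C - A)"
    using assms by (intro card_Un_disjoint) auto
  then have "card (A \<union> C) = card A + card (C - A)" by simp
  then show ?thesis by simp
qed

theorem mainTheorem2:
  fixes V :: "'a set" and E :: "'a set set" and wt :: "'a set \<Rightarrow> real"
  assumes "finite V"
    and "\<forall>e\<in>E. \<exists>u\<in>V. \<exists>v\<in>V. u \<noteq> v \<and> e = {u, v}"
    and "\<forall>e\<in>E. wt e \<ge> 0"
    and "unique_shortest_paths V E wt"
  defines "f \<equiv> expected_revealed V E wt"
  shows "(\<forall>X w. X \<subseteq> V \<and> w \<in> V \<longrightarrow> f (X \<union> {w}) \<ge> f X) \<and>
         (\<forall>X Y w. X \<subseteq> Y \<and> Y \<subseteq> V \<and> w \<in> V \<longrightarrow>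
              f (X \<union> {w}) - f X \<ge> f (Y \<union> {w}) - f Y)"
proof -
  have "E \<subseteq> Pow V"
  proof
    fix e assume "e \<in> E"
    then obtain u v where "u \<in> V" "v \<in> V" "e = {u, v}" using assms(2) by metis
    then show "e \<in> Pow V" by simp
  qed
  moreover have "finite (Pow V)" using assms(1) by simp
  ultimately have finE: "finite E" by (rule finite_subset)
  have fin: "finite (revealed V E wt cap X)" for cap X
    by (rule finite_subset[OF revealed_sub finE])
  define c where "c = real (card (capacity_orders E))"
  have c0: "c \<ge> 0" unfolding c_def by simp
  define g where "g = (\<lambda>cap X. real (card (revealed V E wt cap X)))"
  have fg: "f X = (\<Sum>cap\<in>capacity_orders E. g cap X) / c" for X
    unfolding f_def expected_revealed_def g_def c_def by simp
  have P1: "f (X \<union> {w}) \<ge> f X" for X w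
  proof -
    have "g cap X \<le> g cap (X \<union> {w})" for cap
      unfolding g_def by (intro of_nat_mono card_mono fin revealed_mono) blast
    then have "(\<Sum>cap\<in>capacity_orders E. g cap X) \<le> (\<Sum>cap\<in>capacity_orders E. g cap (X \<union> {w}))"
      by (simp add: sum_mono)
    then show ?thesis unfolding fg using c0 by (simp add: divide_right_mono)
  qed
  have P2: "f (X \<union> {w}) - f X \<ge> f (Y \<union> {w}) - f Y" if "X \<subseteq> Y" for X Y w
  proof -
    have "g cap (Y \<union> {w}) - g cap Y \<le> g cap (X \<union> {w}) - g cap X" for cap
    proof -
      let ?A = "revealed V E wt cap X" and ?B = "revealed V E wt cap Y"
        and ?C = "revealed V E wt cap {w}"
      have AB: "?A \<subseteq> ?B" using that revealed_mono by blast
      have "g cap (X \<union> {w}) - g cap X = real (card (?C - ?A))"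
        unfolding g_def revealed_union[of V E wt cap X "{w}"]
        using card_Un_diff_real[OF fin[of cap X] fin[of cap "{w}"]] by linarith
      moreover have "g cap (Y \<union> {w}) - g cap Y = real (card (?C - ?B))"
        unfolding g_def revealed_union[of V E wt cap Y "{w}"]
        using card_Un_diff_real[OF fin[of cap Y] fin[of cap "{w}"]] by linarith
      moreover have "card (?C - ?B) \<le> card (?C - ?A)"
        by (rule card_mono) (use AB fin[of cap "{w}"] in auto)
      ultimately show ?thesis by simp
    qed
    then have "(\<Sum>cap\<in>capacity_orders E. g cap (Y \<union> {w}) - g cap Y)
        \<le> (\<Sum>cap\<in>capacity_orders E. g cap (X \<union> {w}) - g cap X)"
      by (simp add: sum_mono)
    then have "((\<Sum>cap\<in>capacity_orders E. g cap (Y \<union> {w})) - (\<Sum>cap\<in>capacity_orders E. g cap Y)) / c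
        \<le> ((\<Sum>cap\<in>capacity_orders E. g cap (X \<union> {w})) - (\<Sum>cap\<in>capacity_orders E. g cap X)) / c"
      using c0 by (simp add: sum_subtractf divide_right_mono)
    then show ?thesis unfolding fg by (simp add: diff_divide_distrib)
  qed
  show ?thesis using P1 P2 by blast
qed

end
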